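(* Let $x,y\in S^1\cap\mathbb{H}^2$ be distinct, let $\{x_*,y_*\}=S^1\cap\partial\mathbb{H}^2=\{-1,1\}$, labelled so that $x_*,x,y,y_*$ occur in this order on the upper unit semicircle, and let $z$ be the hyperbolic midpoint of the hyperbolic segment $J[x,y]$. Let $v=L(x,x_* )\cap L(y,y_* )$ and let $a$ be the centre of the circle through $x$ and $y$ orthogonal to $S^1$, i.e. $a=i\frac{y(1+|x|^2)-x(1+|y|^2)}{2(x_2y_1-x_1y_2)}$ where $x=x_1+ix_2$, $y=y_1+iy_2$. Then: (1) if the line $L(x,y)$ meets the real axis, at the point $w$, then the line $L(w,z)$ is tangent to the circle $S^1$; (2) the line $L(v,z)$ is orthogonal to the real axis, i.e. $\operatorname{Re}v=\operatorname{Re}z$; (3) the line $L(a,z)$ is orthogonal to the real axis, i.e. $\operatorname{Re}a=\operatorname{Re}z$; (4) writing $x_1,y_1,z_1$ for the real points $\operatorname{Re}x,\operatorname{Re}y,\operatorname{Re}z$, the angle $\angle y_1z_1y$ equals the angle $\angle x_1z_1x$.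
   Context: $\mathbb{H}^2$ is the upper half plane with boundary $\partial\mathbb{H}^2=\mathbb{R}$, $S^1$ is the unit circle. $L(p,q)$ denotes the line through $p$ and $q$. The hyperbolic distance on $\mathbb{H}^2$ satisfies $\cosh\rho(x,y)=1+\frac{|x-y|^2}{2\operatorname{Im}x\operatorname{Im}y}$; the hyperbolic segment $J[x,y]$ for $x,y\in S^1\cap\mathbb{H}^2$ is the arc of $S^1$ between $x$ and $y$, and its hyperbolic midpoint is the $z\in J[x,y]$ with $\rho(x,z)=\rho(z,y)$. $\angle pqr$ denotes the angle at $q$ between the segments $[q,p]$ and $[q,r]$. *)

theory Defs
  imports "HOL-Analysis.Analysis"
begin

definition hdist :: "complex \<Rightarrow> complex \<Rightarrow> real" where
  "hdist x y = arcosh (1 + (cmod (x - y))^2 / (2 * Im x * Im y))"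

definition hseg :: "complex \<Rightarrow> complex \<Rightarrow> complex set" where
  "hseg x y = {z. cmod z = 1 \<and> Im z > 0 \<and> Re z \<in> closed_segment (Re x) (Re y)}"

definition is_hmidpoint :: "complex \<Rightarrow> complex \<Rightarrow> complex \<Rightarrow> bool" where
  "is_hmidpoint x y z \<longleftrightarrow> z \<in> hseg x y \<and> hdist x z = hdist z y"

definition Lline :: "complex \<Rightarrow> complex \<Rightarrow> complex set" where
  "Lline p q = {p + complex_of_real t * (q - p) | t. True}"

definition tangent_to_circle :: "complex set \<Rightarrow> complex \<Rightarrow> real \<Rightarrow> bool" where
  "tangent_to_circle L c r \<longleftrightarrow> (\<exists>!p. p \<in> L \<and> dist p c = r)"

definition angle :: "complex \<Rightarrow> complex \<Rightarrow> complex \<Rightarrow> real" where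
  "angle p q r = arccos (inner (p - q) (r - q) / (norm (p - q) * norm (r - q)))"

end

theory Submission
  imports Defs
begin

lemma mid_eq:
  assumes hx: "cmod x = 1" "Im x > 0" and hy: "cmod y = 1" "Im y > 0"
    and hz: "cmod z = 1" "Im z > 0" and h: "hdist x z = hdist z y"
  shows "Re z * (Re x * Im y - Re y * Im x) = Im y - Im x"
proof -
  have A: "1 + (cmod (x - z))^2 / (2 * Im x * Im z) \<ge> 1" using hx hz by simp
  have B: "1 + (cmod (z - y))^2 / (2 * Im z * Im y) \<ge> 1" using hy hz by simp
  have "cosh (hdist x z) = cosh (hdist z y)" using h by simp
  then have eq: "(cmod (x - z))^2 / (2 * Im x * Im z) = (cmod (z - y))^2 / (2 * Im z * Im y)"
    unfolding hdist_def using A B by simp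
  have x2: "Re x ^2 + Im x ^2 = 1" using hx cmod_power2[of x] by simp
  have y2: "Re y ^2 + Im y ^2 = 1" using hy cmod_power2[of y] by simp
  have z2: "Re z ^2 + Im z ^2 = 1" using hz cmod_power2[of z] by simp
  have e1: "(cmod (x - z))^2 = (Re x - Re z)^2 + (Im x - Im z)^2" by (simp add: cmod_power2)
  have e2: "(cmod (z - y))^2 = (Re z - Re y)^2 + (Im z - Im y)^2" by (simp add: cmod_power2)
  define L where "L = (cmod (x - z))^2"
  define R where "R = (cmod (z - y))^2"
  have "L * Im y = (L/(2*Im x*Im z)) * (2*Im x*Im z*Im y)" using hx hz by (simp add: field_simps)
  also have "... = (R/(2*Im z*Im y)) * (2*Im x*Im z*Im y)" using eq unfolding L_def R_def by simp
  also have "... = R*Im x" using hy hz by (simp add: field_simps)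
  finally have "((Re x - Re z)^2 + (Im x - Im z)^2) * Im y = ((Re z - Re y)^2 + (Im z - Im y)^2) * Im x"
    unfolding L_def R_def e1 e2 .
  then show ?thesis using x2 y2 z2 by algebra
qed

lemma D_ne:
  assumes x2: "x1^2 + x2^2 = (1::real)" and y2: "y1^2+y2^2 = 1" and "x2 > 0" "y2 > 0" "x1 \<noteq> y1"
  shows "x1 * y2 - y1 * x2 \<noteq> 0"
proof
  assume D: "x1 * y2 - y1 * x2 = 0"
  have "x1^2 * y2^2 = y1^2 * x2^2" using D by (metis eq_iff_diff_eq_0 power_mult_distrib)
  then have "x1^2 = y1^2" using x2 y2 by algebra
  then have "x1 = - y1" using assms(5) by (metis power2_eq_iff)
  moreover have "x2 = y2" using `x1^2 = y1^2` x2 y2 assms(3,4)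
    by (metis add_left_cancel power2_eq_iff_nonneg less_imp_le)
  ultimately have "x1 = 0" using D assms(3) by (simp add: algebra_simps) 
  then show False using `x1 = -y1` assms(5) by simp
qed

lemma ang_arg:
  fixes y :: complex
  shows "inner (complex_of_real (Re y) - complex_of_real c) (y - complex_of_real c)
     / (norm (complex_of_real (Re y) - complex_of_real c) * norm (y - complex_of_real c))
     = \<bar>Re y - c\<bar> / sqrt ((Re y - c)^2 + (Im y)^2)"
proof -
  have i: "inner (complex_of_real (Re y) - complex_of_real c) (y - complex_of_real c) = (Re y - c)^2"
    by (simp add: inner_complex_def power2_eq_square)
  have n1: "norm (complex_of_real (Re y) - complex_of_real c) = \<bar>Re y - c\<bar>"
    by (metis norm_of_real of_real_diff)
  have n2: "norm (y - complex_of_real c) = sqrt ((Re y - c)^2 + (Im y)^2)"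
    by (simp add: cmod_def)
  have g: "\<And>a S::real. a^2 / (\<bar>a\<bar> * S) = \<bar>a\<bar> / S"
  proof -
    fix a S :: real
    show "a^2 / (\<bar>a\<bar> * S) = \<bar>a\<bar> / S"
    proof (cases "a = 0")
      case False
      have "a^2 = \<bar>a\<bar> * \<bar>a\<bar>" by (simp add: power2_eq_square)
      then have "a^2 / (\<bar>a\<bar> * S) = (\<bar>a\<bar> * \<bar>a\<bar>) / (\<bar>a\<bar> * S)" by simp
      also have "... = \<bar>a\<bar> / S" using False by (simp del: abs_mult_self_eq)
      finally show ?thesis .
    qed simp
  qed
  show ?thesis unfolding i n1 n2 g ..
qed

theorem lemma3p1:
  fixes x y xs ys z v a :: complex
  assumes hx: "cmod x = 1" "Im x > 0"
      and hy: "cmod y = 1" "Im y > 0"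
      and hxy: "x \<noteq> y"
      and hends: "xs \<in> {-1, 1}" "ys = - xs"
      and horder: "(Re xs < Re x \<and> Re x < Re y \<and> Re y < Re ys) \<or>
                   (Re xs > Re x \<and> Re x > Re y \<and> Re y > Re ys)"
      and hz: "is_hmidpoint x y z"
      and hv: "v \<in> Lline x xs \<inter> Lline y ys"
      and ha: "a = \<i> * (y * (1 + (cmod x)^2) - x * (1 + (cmod y)^2))
                     / (2 * (Im x * Re y - Re x * Im y))"
  shows "(\<forall>w. Im w = 0 \<and> w \<in> Lline x y \<longrightarrow> tangent_to_circle (Lline w z) 0 1)
       \<and> Re v = Re z
       \<and> Re a = Re z
       \<and> angle (complex_of_real (Re y)) (complex_of_real (Re z)) y
           = angle (complex_of_real (Re x)) (complex_of_real (Re z)) x"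
proof -
  have zc: "cmod z = 1" "Im z > 0" and hd: "hdist x z = hdist z y"
    using hz unfolding is_hmidpoint_def hseg_def by auto
  have x2: "Re x ^2 + Im x ^2 = 1" using hx cmod_power2[of x] by simp
  have y2: "Re y ^2 + Im y ^2 = 1" using hy cmod_power2[of y] by simp
  have z2: "Re z ^2 + Im z ^2 = 1" using zc cmod_power2[of z] by simp
  have zD: "Re z * (Re x * Im y - Re y * Im x) = Im y - Im x"
    using mid_eq[OF hx hy zc hd] .
  have x1y1: "Re x \<noteq> Re y" using horder by auto
  have Dne: "Re x * Im y - Re y * Im x \<noteq> 0" using D_ne[OF x2 y2 hx(2) hy(2) x1y1] .
  have zeq: "Re z = (Im y - Im x) / (Re x * Im y - Re y * Im x)"
    using zD Dne by (simp add: field_simps)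
  have P3: "Re a = Re z"
  proof -
    have "a = \<i> * (2*(y - x)) / complex_of_real (2 * (Im x * Re y - Re x * Im y))"
      using ha hx hy by (simp add: algebra_simps)
    then have "Re a = - (2 * (Im y - Im x)) / (2 * (Im x * Re y - Re x * Im y))"
      by (simp add: Re_divide_of_real)
    also have "... = Re z" unfolding zeq using Dne by (simp add: field_simps)
    finally show ?thesis .
  qed
  have P4: "angle (complex_of_real (Re y)) (complex_of_real (Re z)) y
           = angle (complex_of_real (Re x)) (complex_of_real (Re z)) x"
  proof -
    have "((Re y - Re z) * Im x + (Re x - Re z) * Im y) * (Re x * Im y - Re y * Im x) = 0"
      using zD x2 y2 by algebra
    then have k0: "(Re y - Re z) * Im x = - ((Re x - Re z) * Im y)" using Dne by simp
    define k where "k = Im y / Im x"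
    have kpos: "k > 0" using hx hy by (simp add: k_def)
    have e1: "Re y - Re z = - k * (Re x - Re z)" using k0 hx by (simp add: k_def field_simps)
    have e2: "Im y = k * Im x" using hx by (simp add: k_def)
    have "\<bar>Re y - Re z\<bar> / sqrt ((Re y - Re z)^2 + (Im y)^2)
        = (k * \<bar>Re x - Re z\<bar>) / (k * sqrt ((Re x - Re z)^2 + (Im x)^2))"
    proof -
      have "(Re y - Re z)^2 + (Im y)^2 = k^2 * ((Re x - Re z)^2 + (Im x)^2)"
        unfolding e1 e2 by (simp add: power2_eq_square algebra_simps)
      then have "sqrt ((Re y - Re z)^2 + (Im y)^2) = k * sqrt ((Re x - Re z)^2 + (Im x)^2)"
        using kpos by (simp add: real_sqrt_mult)
      moreover have "\<bar>Re y - Re z\<bar> = k * \<bar>Re x - Re z\<bar>" unfolding e1 using kpos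
        by (simp add: abs_mult)
      ultimately show ?thesis by simp
    qed
    also have "... = \<bar>Re x - Re z\<bar> / sqrt ((Re x - Re z)^2 + (Im x)^2)" using kpos by simp
    finally show ?thesis unfolding angle_def ang_arg by simp
  qed
  have P2: "Re v = Re z"
  proof -
    obtain t where vt: "v = x + complex_of_real t * (xs - x)"
      using hv unfolding Lline_def by blast
    obtain s where vs: "v = y + complex_of_real s * (ys - y)"
      using hv unfolding Lline_def by blast
    have ex1: "\<bar>Re x\<bar> \<le> 1" using hx abs_Re_le_cmod[of x] by simp
    have ey1: "\<bar>Re y\<bar> \<le> 1" using hy abs_Re_le_cmod[of y] by simp
    from hends(1) show ?thesis
    proof
      assume xs: "xs = -1"
      then have ys: "ys = 1" using hends(2) by simp
      have o: "-1 < Re x" "Re x < Re y" "Re y < 1" using horder ex1 ey1 xs ys by auto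
      have r1: "Re v = Re x + t * (-1 - Re x)" "Im v = Im x - t * Im x" unfolding vt xs by (simp_all add: algebra_simps)
      have r2: "Re v = Re y + s * (1 - Re y)" "Im v = Im y - s * Im y" unfolding vs ys by (simp_all add: algebra_simps)
      define d where "d = Im x * (1 - Re y) + Im y * (1 + Re x)"
      have "Im x * (1 - Re y) > 0" "Im y * (1 + Re x) > 0" using o hx hy by simp_all
      then have dne: "d \<noteq> 0" unfolding d_def by linarith
      have L1: "(Re v + 1) * Im x = Im v * (1 + Re x)" using r1 by algebra
      have L2: "(Re v - 1) * Im y = - Im v * (1 - Re y)" using r2 by algebra
      have L3: "Re v * d = (1 + Re x) * Im y - (1 - Re y) * Im x" using L1 L2 unfolding d_def by algebra
      have L4: "((1 + Re x) * Im y - (1 - Re y) * Im x) * (Re x * Im y - Re y * Im x) = (Im y - Im x) * d"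
        using x2 y2 unfolding d_def by algebra
      have "(Re v * (Re x * Im y - Re y * Im x) - (Im y - Im x)) * d = 0"
        using L3 L4 by algebra
      then have "Re v * (Re x * Im y - Re y * Im x) = Im y - Im x" using dne by simp
      then show ?thesis using zD Dne by (metis mult_right_cancel)
    next
      assume "xs \<in> {1}"
      then have xs: "xs = 1" by simp
      then have ys: "ys = -1" using hends(2) by simp
      have o: "1 > Re x" "Re x > Re y" "Re y > -1" using horder ex1 ey1 xs ys by auto
      have r1: "Re v = Re x + t * (1 - Re x)" "Im v = Im x - t * Im x" unfolding vt xs by (simp_all add: algebra_simps)
      have r2: "Re v = Re y + s * (-1 - Re y)" "Im v = Im y - s * Im y" unfolding vs ys by (simp_all add: algebra_simps)
      define d where "d = Im x * (1 + Re y) + Im y * (1 - Re x)"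
      have "Im x * (1 + Re y) > 0" "Im y * (1 - Re x) > 0" using o hx hy by simp_all
      then have dne: "d \<noteq> 0" unfolding d_def by linarith
      have L1: "(Re v - 1) * Im x = - Im v * (1 - Re x)" using r1 by algebra
      have L2: "(Re v + 1) * Im y = Im v * (1 + Re y)" using r2 by algebra
      have L3: "Re v * d = (1 + Re y) * Im x - (1 - Re x) * Im y" using L1 L2 unfolding d_def by algebra
      have L4: "((1 + Re y) * Im x - (1 - Re x) * Im y) * (Re x * Im y - Re y * Im x) = (Im y - Im x) * d"
        using x2 y2 unfolding d_def by algebra
      have "(Re v * (Re x * Im y - Re y * Im x) - (Im y - Im x)) * d = 0"
        using L3 L4 by algebra
      then have "Re v * (Re x * Im y - Re y * Im x) = Im y - Im x" using dne by simp
      then show ?thesis using zD Dne by (metis mult_right_cancel)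
    qed
  qed
  have P1: "\<forall>w. Im w = 0 \<and> w \<in> Lline x y \<longrightarrow> tangent_to_circle (Lline w z) 0 1"
  proof (intro allI impI)
    fix w assume hw: "Im w = 0 \<and> w \<in> Lline x y"
    then obtain t where wt: "w = x + complex_of_real t * (y - x)" unfolding Lline_def by blast
    have r: "Re w = Re x + t * (Re y - Re x)" "0 = Im x + t * (Im y - Im x)"
      using hw unfolding wt by (simp_all add: algebra_simps)
    have "(Re w * Re z - 1) * (Re x * Im y - Re y * Im x) = 0"
      using r zD by algebra
    then have wz: "Re w * Re z = 1" using Dne by simp
    show "tangent_to_circle (Lline w z) 0 1"
      unfolding tangent_to_circle_def
    proof (rule ex1I[of _ z])
      show "z \<in> Lline w z \<and> dist z 0 = 1"
        using zc unfolding Lline_def by (auto intro: exI[of _ 1])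
    next
      fix p assume hp: "p \<in> Lline w z \<and> dist p 0 = 1"
      then obtain s where ps: "p = w + complex_of_real s * (z - w)" unfolding Lline_def by blast
      have p2: "Re p ^2 + Im p ^2 = 1" using hp cmod_power2[of p] by simp
      have q: "Re p = Re w + s * (Re z - Re w)" "Im p = s * Im z"
        using hw unfolding ps by (simp_all add: algebra_simps)
      have "(s - 1)^2 * ((Re z - Re w)^2 + Im z ^2) = 0"
        using q p2 z2 wz by algebra
      moreover have "(Re z - Re w)^2 + Im z ^2 > 0" using zc by (simp add: add_nonneg_pos)
      ultimately have "s = 1" using zc(2) by auto
      then show "p = z" using ps by simp
    qed
  qed
  show ?thesis using P1 P2 P3 P4 by blast
qed

end
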